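(* Let $p(\cdot),r(\cdot)\in\mathcal{P}^{\log}(\mathbb{R}^n)$ with $r(\cdot)\le p(\cdot)$, and let $q(\cdot)$ be defined by $1/r(\cdot)=1/p(\cdot)+1/q(\cdot)$. If $\omega\in\mathbb{A}_{p(\cdot),r(\cdot)}$, then $\omega\in\mathcal{A}_{p(\cdot)}$ and $\omega^{-1}\in\mathcal{A}_{q(\cdot)}$.
   Context: Cubes have sides parallel to the axes. $\mathcal{P}(\mathbb{R}^n)$: measurable $p(\cdot):\mathbb{R}^n\to[1,\infty]$; $p'$ with $1/p+1/p'=1$; $\|f\|_{p(\cdot)}=\inf\{\lambda>0:\int_{\{p<\infty\}}|f/\lambda|^{p(x)}dx+\|(f/\lambda)\chi_{\{p=\infty\}}\|_\infty\le1\}$. $\mathcal{P}^{\log}$: $1/p$ satisfies $|1/p(x)-1/p(y)|\le c_0/(-\log|x-y|)$ for $|x-y|<1/2$ and $|1/p(x)-1/p_\infty|\le c_\infty/\log(e+|x|)$. $\omega\in\mathcal{A}_{p(\cdot)}$: $\|\omega\chi_Q\|_{p(\cdot)}\|\omega^{-1}\chi_Q\|_{p'(\cdot)}\le C|Q|$ for all cubes. $\omega\in\mathbb{A}_{p(\cdot),r(\cdot)}$: $\|\chi_Q\omega\|_{p(\cdot)}\|\chi_Q\omega^{-1}\|_{q(\cdot)}\le C\|\chi_Q\|_{r(\cdot)}$ for all cubes, with $1/r=1/p+1/q$. *)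

theory Defs
  imports "HOL-Analysis.Analysis"
begin

definition recip :: "('a \<Rightarrow> ereal) \<Rightarrow> 'a \<Rightarrow> real" where
  "recip p x = (if p x = \<infinity> then 0 else 1 / real_of_ereal (p x))"

definition from_recip :: "('a \<Rightarrow> real) \<Rightarrow> 'a \<Rightarrow> ereal" where
  "from_recip s x = (if s x = 0 then \<infinity> else ereal (1 / s x))"

definition conj_exp :: "('a \<Rightarrow> ereal) \<Rightarrow> 'a \<Rightarrow> ereal" where
  "conj_exp p = from_recip (\<lambda>x. 1 - recip p x)"

definition quot_exp :: "('a \<Rightarrow> ereal) \<Rightarrow> ('a \<Rightarrow> ereal) \<Rightarrow> 'a \<Rightarrow> ereal" where
  "quot_exp p r = from_recip (\<lambda>x. recip r x - recip p x)"

definition ess_sup_leb :: "('a::euclidean_space \<Rightarrow> ennreal) \<Rightarrow> ennreal" where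
  "ess_sup_leb g = Inf {c. AE x in lebesgue. g x \<le> c}"

definition modular :: "('a::euclidean_space \<Rightarrow> ereal) \<Rightarrow> ('a \<Rightarrow> real) \<Rightarrow> ennreal" where
  "modular p f =
     (\<integral>\<^sup>+ x. indicator {y. p y < \<infinity>} x * ennreal (\<bar>f x\<bar> powr real_of_ereal (p x)) \<partial>lebesgue)
     + ess_sup_leb (\<lambda>x. indicator {y. p y = \<infinity>} x * ennreal \<bar>f x\<bar>)"

text \<open>Luxemburg norm of the variable Lebesgue space L^{p(.)} (value \<infinity> if no \<lambda> works).\<close>
definition vnorm :: "('a::euclidean_space \<Rightarrow> ereal) \<Rightarrow> ('a \<Rightarrow> real) \<Rightarrow> ennreal" where
  "vnorm p f = Inf {ennreal t | t. t > 0 \<and> modular p (\<lambda>x. f x / t) \<le> 1}"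

definition is_cube :: "'a::euclidean_space set \<Rightarrow> bool" where
  "is_cube Q \<longleftrightarrow> (\<exists>a b l. l > 0 \<and> (\<forall>i\<in>Basis. b \<bullet> i - a \<bullet> i = l) \<and> Q = cbox a b)"

definition var_exp :: "('a::euclidean_space \<Rightarrow> ereal) \<Rightarrow> bool" where
  "var_exp p \<longleftrightarrow> p \<in> borel_measurable lebesgue \<and> (\<forall>x. 1 \<le> p x)"

definition var_exp_log :: "('a::euclidean_space \<Rightarrow> ereal) \<Rightarrow> bool" where
  "var_exp_log p \<longleftrightarrow> var_exp p \<and>
     (\<exists>c0. \<forall>x y. 0 < dist x y \<and> dist x y < 1/2 \<longrightarrow>
              \<bar>recip p x - recip p y\<bar> \<le> c0 / (- ln (dist x y))) \<and>
     (\<exists>cinf pinf. 1 \<le> pinf \<and>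
        (\<forall>x. \<bar>recip p x - recip (\<lambda>_. pinf) x\<bar> \<le> cinf / ln (exp 1 + norm x)))"

definition weight :: "('a::euclidean_space \<Rightarrow> real) \<Rightarrow> bool" where
  "weight w \<longleftrightarrow> w \<in> borel_measurable lebesgue \<and> (AE x in lebesgue. 0 < w x)"

definition A_var :: "('a::euclidean_space \<Rightarrow> ereal) \<Rightarrow> ('a \<Rightarrow> real) \<Rightarrow> bool" where
  "A_var p w \<longleftrightarrow> (\<exists>C::real. \<forall>Q. is_cube Q \<longrightarrow>
     vnorm p (\<lambda>x. w x * indicator Q x) * vnorm (conj_exp p) (\<lambda>x. inverse (w x) * indicator Q x)
       \<le> ennreal C * emeasure lebesgue Q)"

definition AA_var :: "('a::euclidean_space \<Rightarrow> ereal) \<Rightarrow> ('a \<Rightarrow> ereal) \<Rightarrow> ('a \<Rightarrow> real) \<Rightarrow> bool" where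
  "AA_var p r w \<longleftrightarrow> (\<exists>C::real. \<forall>Q. is_cube Q \<longrightarrow>
     vnorm p (\<lambda>x. indicator Q x * w x) * vnorm (quot_exp p r) (\<lambda>x. indicator Q x * inverse (w x))
       \<le> ennreal C * vnorm r (indicator Q))"

end

theory Submission
  imports Defs
begin


definition Ms :: "('a::euclidean_space \<Rightarrow> real) \<Rightarrow> ('a \<Rightarrow> real) \<Rightarrow> ennreal" where
  "Ms s f = (\<integral>\<^sup>+ x. indicator {y. 0 < s y} x * ennreal (\<bar>f x\<bar> powr (1 / s x)) \<partial>lebesgue)
     + ess_sup_leb (\<lambda>x. indicator {y. s y = 0} x * ennreal \<bar>f x\<bar>)"

definition vn :: "('a::euclidean_space \<Rightarrow> real) \<Rightarrow> ('a \<Rightarrow> real) \<Rightarrow> ennreal" where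
  "vn s f = Inf {ennreal t | t. t > 0 \<and> Ms s (\<lambda>x. f x / t) \<le> 1}"

lemma recip_ge1:
  assumes "1 \<le> p x"
  shows "0 \<le> recip p x" "recip p x \<le> 1" "p x = \<infinity> \<longleftrightarrow> recip p x = 0"
    "p x \<noteq> \<infinity> \<Longrightarrow> real_of_ereal (p x) = 1 / recip p x"
proof -
  show "0 \<le> recip p x" using assms unfolding recip_def
    by (cases "p x") auto
  show "recip p x \<le> 1" using assms unfolding recip_def
    by (cases "p x") auto
  show "p x = \<infinity> \<longleftrightarrow> recip p x = 0" using assms unfolding recip_def
    by (cases "p x") auto
  show "p x \<noteq> \<infinity> \<Longrightarrow> real_of_ereal (p x) = 1 / recip p x" using assms unfolding recip_def
    by (cases "p x") auto
qed

lemma modular_Ms: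
  assumes "\<And>x. 1 \<le> p x"
  shows "modular p f = Ms (recip p) f"
proof -
  have 1: "{y. p y < \<infinity>} = {y. 0 < recip p y}"
    using recip_ge1[where p=p, OF assms] by (auto simp: less_le)
  have 2: "{y. p y = \<infinity>} = {y. recip p y = 0}"
    using recip_ge1[where p=p, OF assms] by auto
  have 3: "indicator {y. 0 < recip p y} x * ennreal (\<bar>f x\<bar> powr real_of_ereal (p x)) =
      indicator {y. 0 < recip p y} x * ennreal (\<bar>f x\<bar> powr (1 / recip p x))" for x
    using recip_ge1[where p=p and x=x, OF assms] by (cases "p x = \<infinity>") (auto simp: indicator_def)
  show ?thesis unfolding modular_def Ms_def 1 2 3 ..
qed

lemma vnorm_vn:
  assumes "\<And>x. 1 \<le> p x"
  shows "vnorm p f = vn (recip p) f"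
  unfolding vnorm_def vn_def modular_Ms[OF assms] ..

lemma recip_from_recip: "recip (from_recip s) = s"
  by (rule ext) (simp add: recip_def from_recip_def)

lemma from_recip_ge1:
  assumes "0 \<le> s x" "s x \<le> 1"
  shows "1 \<le> from_recip s x"
  using assms by (auto simp: from_recip_def)

lemma recip_mono:
  assumes "1 \<le> r x" "r x \<le> p x"
  shows "recip p x \<le> recip r x"
  using assms unfolding recip_def
  by (cases "p x"; cases "r x") (auto simp: frac_le)

lemma recip_meas:
  assumes "p \<in> borel_measurable lebesgue"
  shows "recip p \<in> borel_measurable lebesgue"
  unfolding recip_def using assms by measurable

lemma ess_le:
  assumes "AE x in lebesgue. g x \<le> c"
  shows "ess_sup_leb g \<le> c"
  unfolding ess_sup_leb_def using assms by (auto intro: Inf_lower)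

lemma ess_AE: "AE x in lebesgue. g x \<le> ess_sup_leb g"
proof (cases "ess_sup_leb g = top")
  case True
  then show ?thesis by simp
next
  case False
  define E where "E = ess_sup_leb g"
  have "AE x in lebesgue. g x \<le> E + ennreal (1 / Suc n)" for n
  proof -
    have "E < E + ennreal (1 / Suc n)"
      using False unfolding E_def
      by (simp add: ennreal_add_left_cancel_less less_top)
    then obtain c where "c \<in> {c. AE x in lebesgue. g x \<le> c}" "c < E + ennreal (1 / Suc n)"
      unfolding E_def ess_sup_leb_def Inf_less_iff by blast
    then show ?thesis by (auto elim: AE_mp)
  qed
  then have "AE x in lebesgue. \<forall>n. g x \<le> E + ennreal (1 / Suc n)"
    by (simp add: AE_all_countable)
  then show ?thesis unfolding E_def[symmetric]
  proof (rule AE_mp, intro AE_I2 impI)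
    fix x assume H: "\<forall>n. g x \<le> E + ennreal (1 / Suc n)"
    show "g x \<le> E"
    proof (rule ennreal_le_epsilon)
      fix e :: real assume "0 < e"
      then obtain n where "1 / Suc n < e"
        by (meson nat_approx_posE)
      then have "E + ennreal (1 / Suc n) \<le> E + ennreal e"
        by (intro add_left_mono ennreal_leI) simp
      then show "g x \<le> E + ennreal e" using H order.trans by blast
    qed
  qed
qed



lemma Ms_mono:
  assumes "\<And>x. \<bar>f x\<bar> \<le> \<bar>g x\<bar>"
  shows "Ms s f \<le> Ms s g"
  unfolding Ms_def
proof (intro add_mono nn_integral_mono)
  fix x
  show "indicator {y. 0 < s y} x * ennreal (\<bar>f x\<bar> powr (1 / s x))
     \<le> indicator {y. 0 < s y} x * ennreal (\<bar>g x\<bar> powr (1 / s x))"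
    using assms[of x] by (auto simp: indicator_def intro!: ennreal_leI powr_mono2)
next
  show "ess_sup_leb (\<lambda>x. indicator {y. s y = 0} x * ennreal \<bar>f x\<bar>)
      \<le> ess_sup_leb (\<lambda>x. indicator {y. s y = 0} x * ennreal \<bar>g x\<bar>)"
    apply (rule ess_le)
    using ess_AE[of "\<lambda>x. indicator {y. s y = 0} x * ennreal \<bar>g x\<bar>"]
    apply (rule AE_mp)
    apply (rule AE_I2)
    using assms by (auto simp: indicator_def intro: order.trans[rotated] ennreal_leI)
qed

lemma vn_le:
  assumes "t > 0" "Ms s (\<lambda>x. f x / t) \<le> 1"
  shows "vn s f \<le> ennreal t"
  unfolding vn_def using assms by (auto intro!: Inf_lower)

lemma vn_lt:
  assumes "vn s f < ennreal a"
  shows "Ms s (\<lambda>x. f x / a) \<le> 1"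
proof -
  obtain c where c: "c \<in> {ennreal t | t. t > 0 \<and> Ms s (\<lambda>x. f x / t) \<le> 1}" "c < ennreal a"
    using assms unfolding vn_def Inf_less_iff by blast
  then obtain t where t: "t > 0" "Ms s (\<lambda>x. f x / t) \<le> 1" "ennreal t < ennreal a" by blast
  then have "t < a" by (simp add: ennreal_less_iff)
  have "Ms s (\<lambda>x. f x / a) \<le> Ms s (\<lambda>x. f x / t)"
    apply (rule Ms_mono)
    using t \<open>t < a\<close> by (auto simp: abs_div intro!: divide_left_mono)
  then show ?thesis using t by simp
qed

lemma Ms_scale:
  assumes sm: "s \<in> borel_measurable lebesgue" and fm: "f \<in> borel_measurable lebesgue"
    and s01: "\<And>x. 0 \<le> s x" "\<And>x. s x \<le> 1" and A: "1 \<le> A"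
  shows "Ms s (\<lambda>x. f x / A) \<le> ennreal (1 / A) * Ms s f"
proof -
  have pw: "indicator {y. 0 < s y} x * ennreal (\<bar>f x / A\<bar> powr (1 / s x))
     \<le> ennreal (1 / A) * (indicator {y. 0 < s y} x * ennreal (\<bar>f x\<bar> powr (1 / s x)))" for x
  proof (cases "0 < s x")
    case True
    have e: "1 \<le> 1 / s x" using True s01(2)[of x] by simp
    have "\<bar>f x / A\<bar> powr (1 / s x) = \<bar>f x\<bar> powr (1 / s x) * (1 / A) powr (1 / s x)"
      using A by (simp add: abs_div powr_divide divide_simps)
    also have "\<dots> \<le> \<bar>f x\<bar> powr (1 / s x) * (1 / A) powr 1"
      apply (rule mult_left_mono)
       apply (rule powr_mono') using e A by auto
    also have "\<dots> = (1 / A) * \<bar>f x\<bar> powr (1 / s x)" using A by simp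
    finally show ?thesis using True A
      by (auto simp: indicator_def ennreal_mult[symmetric] intro!: ennreal_leI)
  qed (simp add: indicator_def)
  have I: "(\<integral>\<^sup>+ x. indicator {y. 0 < s y} x * ennreal (\<bar>f x / A\<bar> powr (1 / s x)) \<partial>lebesgue)
      \<le> ennreal (1 / A) * (\<integral>\<^sup>+ x. indicator {y. 0 < s y} x * ennreal (\<bar>f x\<bar> powr (1 / s x)) \<partial>lebesgue)"
    apply (subst nn_integral_cmult[symmetric])
     apply (use sm fm in measurable)
    apply (rule nn_integral_mono) using pw by simp
  have E: "ess_sup_leb (\<lambda>x. indicator {y. s y = 0} x * ennreal \<bar>f x / A\<bar>)
     \<le> ennreal (1 / A) * ess_sup_leb (\<lambda>x. indicator {y. s y = 0} x * ennreal \<bar>f x\<bar>)"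
    apply (rule ess_le)
    using ess_AE[of "\<lambda>x. indicator {y. s y = 0} x * ennreal \<bar>f x\<bar>"]
    apply (rule AE_mp)
    apply (rule AE_I2)
    apply (rule impI)
    subgoal for x
      apply (rule order.trans[rotated])
       apply (erule mult_left_mono)
       apply simp
      using A by (auto simp: indicator_def abs_div ennreal_mult[symmetric] intro!: ennreal_leI)
    done
  show ?thesis unfolding Ms_def using add_mono[OF I E] by (simp add: distrib_left)
qed

lemma vn_le_scale:
  assumes sm: "s \<in> borel_measurable lebesgue" and fm: "f \<in> borel_measurable lebesgue"
    and s01: "\<And>x. 0 \<le> s x" "\<And>x. s x \<le> 1" and A: "1 \<le> A" and t: "0 < t"
    and M: "Ms s (\<lambda>x. f x / t) \<le> ennreal A"
  shows "vn s f \<le> ennreal (A * t)"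
proof (rule vn_le)
  show "0 < A * t" using A t by simp
  have "Ms s (\<lambda>x. f x / (A * t)) = Ms s (\<lambda>x. (f x / t) / A)"
    by (simp add: mult.commute)
  also have "\<dots> \<le> ennreal (1 / A) * Ms s (\<lambda>x. f x / t)"
    by (rule Ms_scale[OF sm _ s01 A]) (use fm in measurable)
  also have "\<dots> \<le> ennreal (1 / A) * ennreal A"
    by (rule mult_left_mono[OF M]) simp
  also have "\<dots> = 1" using A by (simp add: ennreal_mult[symmetric])
  finally show "Ms s (\<lambda>x. f x / (A * t)) \<le> 1" .
qed



lemma young_max:
  fixes a b s1 s2 :: real
  assumes "0 \<le> a" "0 \<le> b" "0 < s1" "0 < s2"
  shows "(a * b) powr (1 / (s1 + s2)) \<le> a powr (1 / s1) + b powr (1 / s2)"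
proof -
  define A where "A = a powr (1 / s1)"
  define B where "B = b powr (1 / s2)"
  define m where "m = max A B"
  have A0: "0 \<le> A" and B0: "0 \<le> B" unfolding A_def B_def by auto
  have aA: "a = A powr s1" unfolding A_def powr_powr using assms by simp
  have bB: "b = B powr s2" unfolding B_def powr_powr using assms by simp
  have "(a * b) powr (1 / (s1 + s2)) = a powr (1 / (s1 + s2)) * b powr (1 / (s1 + s2))"
    by (simp add: powr_mult)
  also have "a powr (1 / (s1 + s2)) = A powr (s1 / (s1 + s2))"
    unfolding aA powr_powr by simp
  also have "b powr (1 / (s1 + s2)) = B powr (s2 / (s1 + s2))"
    unfolding bB powr_powr by simp
  also have "A powr (s1 / (s1 + s2)) * B powr (s2 / (s1 + s2))
      \<le> m powr (s1 / (s1 + s2)) * m powr (s2 / (s1 + s2))"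
    apply (intro mult_mono powr_mono2)
    using assms A0 B0 by (auto simp: m_def)
  also have "\<dots> = m powr ((s1 + s2) / (s1 + s2))"
    by (simp only: powr_add[symmetric] add_divide_distrib)
  also have "\<dots> = m" using assms A0 B0 by (simp add: m_def)
  also have "\<dots> \<le> A + B" using A0 B0 by (simp add: m_def)
  finally show ?thesis unfolding A_def B_def .
qed

lemma Ms_parts:
  assumes "Ms s F \<le> 1"
  shows "(\<integral>\<^sup>+ x. indicator {y. 0 < s y} x * ennreal (\<bar>F x\<bar> powr (1 / s x)) \<partial>lebesgue) \<le> 1"
    "AE x in lebesgue. s x = 0 \<longrightarrow> \<bar>F x\<bar> \<le> 1"
proof -
  show "(\<integral>\<^sup>+ x. indicator {y. 0 < s y} x * ennreal (\<bar>F x\<bar> powr (1 / s x)) \<partial>lebesgue) \<le> 1"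
    using assms unfolding Ms_def by (meson add_increasing2 order.trans zero_le order_refl)
  have E: "ess_sup_leb (\<lambda>x. indicator {y. s y = 0} x * ennreal \<bar>F x\<bar>) \<le> 1"
    using assms unfolding Ms_def by (meson add_increasing order.trans zero_le order_refl)
  show "AE x in lebesgue. s x = 0 \<longrightarrow> \<bar>F x\<bar> \<le> 1"
    using ess_AE[of "\<lambda>x. indicator {y. s y = 0} x * ennreal \<bar>F x\<bar>"]
    apply (rule AE_mp)
    apply (rule AE_I2)
    using E by (auto simp: indicator_def dest: order.trans)
qed

lemma Ms_holder:
  assumes s1m: "s1 \<in> borel_measurable lebesgue" and s2m: "s2 \<in> borel_measurable lebesgue"
    and Fm: "F \<in> borel_measurable lebesgue" and Gm: "G \<in> borel_measurable lebesgue"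
    and s1p: "\<And>x. 0 \<le> s1 x" and s2p: "\<And>x. 0 \<le> s2 x"
    and M1: "Ms s1 F \<le> 1" and M2: "Ms s2 G \<le> 1"
  shows "Ms (\<lambda>x. s1 x + s2 x) (\<lambda>x. F x * G x) \<le> 3"
proof -
  define u where "u x = indicator {y. 0 < s1 y} x * ennreal (\<bar>F x\<bar> powr (1 / s1 x))" for x
  define v where "v x = indicator {y. 0 < s2 y} x * ennreal (\<bar>G x\<bar> powr (1 / s2 x))" for x
  have Iu: "integral\<^sup>N lebesgue u \<le> 1" using Ms_parts(1)[OF M1] unfolding u_def .
  have Iv: "integral\<^sup>N lebesgue v \<le> 1" using Ms_parts(1)[OF M2] unfolding v_def .
  have AE1: "AE x in lebesgue. s1 x = 0 \<longrightarrow> \<bar>F x\<bar> \<le> 1" by (rule Ms_parts(2)[OF M1])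
  have AE2: "AE x in lebesgue. s2 x = 0 \<longrightarrow> \<bar>G x\<bar> \<le> 1" by (rule Ms_parts(2)[OF M2])
  have pw: "AE x in lebesgue. indicator {y. 0 < s1 y + s2 y} x * ennreal (\<bar>F x * G x\<bar> powr (1 / (s1 x + s2 x)))
      \<le> u x + v x"
    using AE1 AE2
  proof (eventually_elim)
    case (elim x)
    show ?case
    proof (cases "0 < s1 x + s2 x")
      case False
      then show ?thesis by (simp add: indicator_def)
    next
      case pos: True
      consider "0 < s1 x" "0 < s2 x" | "s1 x = 0" "0 < s2 x" | "0 < s1 x" "s2 x = 0"
        using pos s1p[of x] s2p[of x] by (auto simp: less_le)
      then show ?thesis
      proof cases
        case 1
        have "\<bar>F x * G x\<bar> powr (1 / (s1 x + s2 x)) \<le> \<bar>F x\<bar> powr (1 / s1 x) + \<bar>G x\<bar> powr (1 / s2 x)"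
          using young_max[of "\<bar>F x\<bar>" "\<bar>G x\<bar>" "s1 x" "s2 x"] 1 by (simp add: abs_mult)
        moreover have "u x + v x = ennreal (\<bar>F x\<bar> powr (1 / s1 x) + \<bar>G x\<bar> powr (1 / s2 x))"
          using 1 by (simp add: u_def v_def ennreal_plus)
        ultimately have "ennreal (\<bar>F x * G x\<bar> powr (1 / (s1 x + s2 x))) \<le> u x + v x"
          by (metis ennreal_leI)
        then show ?thesis using pos by (simp add: indicator_def)
      next
        case 2
        have "\<bar>F x * G x\<bar> \<le> \<bar>G x\<bar>" using elim 2
          by (simp add: abs_mult mult_left_le_one_le)
        then have "\<bar>F x * G x\<bar> powr (1 / (s1 x + s2 x)) \<le> \<bar>G x\<bar> powr (1 / s2 x)"
          using 2 by (auto intro!: powr_mono2)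
        moreover have "v x = ennreal (\<bar>G x\<bar> powr (1 / s2 x))"
          using 2 by (simp add: v_def)
        ultimately have "indicator {y. 0 < s1 y + s2 y} x * ennreal (\<bar>F x * G x\<bar> powr (1 / (s1 x + s2 x))) \<le> v x"
          using pos by (simp add: indicator_def ennreal_leI)
        then show ?thesis by (rule order.trans) simp
      next
        case 3
        have "\<bar>F x * G x\<bar> \<le> \<bar>F x\<bar>" using elim 3
          by (simp add: abs_mult mult_right_le_one_le)
        then have "\<bar>F x * G x\<bar> powr (1 / (s1 x + s2 x)) \<le> \<bar>F x\<bar> powr (1 / s1 x)"
          using 3 by (auto intro!: powr_mono2)
        moreover have "u x = ennreal (\<bar>F x\<bar> powr (1 / s1 x))"
          using 3 by (simp add: u_def)
        ultimately have "indicator {y. 0 < s1 y + s2 y} x * ennreal (\<bar>F x * G x\<bar> powr (1 / (s1 x + s2 x))) \<le> u x"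
          using pos by (simp add: indicator_def ennreal_leI)
        then show ?thesis by (rule order.trans) simp
      qed
    qed
  qed
  have I: "(\<integral>\<^sup>+ x. indicator {y. 0 < s1 y + s2 y} x * ennreal (\<bar>F x * G x\<bar> powr (1 / (s1 x + s2 x))) \<partial>lebesgue) \<le> 2"
  proof -
    have "(\<integral>\<^sup>+ x. indicator {y. 0 < s1 y + s2 y} x * ennreal (\<bar>F x * G x\<bar> powr (1 / (s1 x + s2 x))) \<partial>lebesgue)
        \<le> (\<integral>\<^sup>+ x. u x + v x \<partial>lebesgue)"
      by (rule nn_integral_mono_AE[OF pw])
    also have "\<dots> = integral\<^sup>N lebesgue u + integral\<^sup>N lebesgue v"
      by (rule nn_integral_add) (unfold u_def v_def, use s1m s2m Fm Gm in measurable)+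
    also have "\<dots> \<le> 1 + 1" by (intro add_mono Iu Iv)
    finally show ?thesis by simp
  qed
  have E: "ess_sup_leb (\<lambda>x. indicator {y. s1 y + s2 y = 0} x * ennreal \<bar>F x * G x\<bar>) \<le> 1"
    apply (rule ess_le)
    using AE1 AE2
    apply eventually_elim
    subgoal for x
    proof -
      assume h1: "s1 x = 0 \<longrightarrow> \<bar>F x\<bar> \<le> 1" and h2: "s2 x = 0 \<longrightarrow> \<bar>G x\<bar> \<le> 1"
      show ?thesis
      proof (cases "s1 x + s2 x = 0")
        case True
        then have "s1 x = 0" "s2 x = 0" using s1p[of x] s2p[of x] by linarith+
        then have "\<bar>F x * G x\<bar> \<le> 1" using h1 h2 by (simp add: abs_mult mult_le_one)
        then show ?thesis using True by (simp add: indicator_def ennreal_leI)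
      qed (simp add: indicator_def)
    qed
    done
  show ?thesis unfolding Ms_def using add_mono[OF I E] by simp
qed



lemma vn_holder_aux:
  assumes s1m: "s1 \<in> borel_measurable lebesgue" and s2m: "s2 \<in> borel_measurable lebesgue"
    and fm: "f \<in> borel_measurable lebesgue" and gm: "g \<in> borel_measurable lebesgue"
    and s1p: "\<And>x. 0 \<le> s1 x" and s2p: "\<And>x. 0 \<le> s2 x" and s12: "\<And>x. s1 x + s2 x \<le> 1"
    and a: "vn s1 f < ennreal a" "0 < a" and b: "vn s2 g < ennreal b" "0 < b"
  shows "vn (\<lambda>x. s1 x + s2 x) (\<lambda>x. f x * g x) \<le> ennreal (3 * (a * b))"
proof (rule vn_le_scale)
  show "(\<lambda>x. s1 x + s2 x) \<in> borel_measurable lebesgue" using s1m s2m by measurable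
  show "(\<lambda>x. f x * g x) \<in> borel_measurable lebesgue" using fm gm by measurable
  show "0 \<le> s1 x + s2 x" for x using s1p[of x] s2p[of x] by simp
  show "s1 x + s2 x \<le> 1" for x by (rule s12)
  show "(1::real) \<le> 3" by simp
  show "0 < a * b" using a b by simp
  have "Ms (\<lambda>x. s1 x + s2 x) (\<lambda>x. (f x / a) * (g x / b)) \<le> 3"
  proof (rule Ms_holder[OF s1m s2m _ _ s1p s2p vn_lt[OF a(1)] vn_lt[OF b(1)]])
    show "(\<lambda>x. f x / a) \<in> borel_measurable lebesgue" using fm by measurable
    show "(\<lambda>x. g x / b) \<in> borel_measurable lebesgue" using gm by measurable
  qed
  moreover have "(\<lambda>x. (f x / a) * (g x / b)) = (\<lambda>x. f x * g x / (a * b))" by auto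
  ultimately show "Ms (\<lambda>x. s1 x + s2 x) (\<lambda>x. f x * g x / (a * b)) \<le> ennreal 3" by simp
qed

lemma vn_holder:
  assumes s1m: "s1 \<in> borel_measurable lebesgue" and s2m: "s2 \<in> borel_measurable lebesgue"
    and fm: "f \<in> borel_measurable lebesgue" and gm: "g \<in> borel_measurable lebesgue"
    and s1p: "\<And>x. 0 \<le> s1 x" and s2p: "\<And>x. 0 \<le> s2 x" and s12: "\<And>x. s1 x + s2 x \<le> 1"
    and fin: "vn s1 f < \<infinity>" "vn s2 g < \<infinity>"
  shows "vn (\<lambda>x. s1 x + s2 x) (\<lambda>x. f x * g x) \<le> 3 * vn s1 f * vn s2 g"
proof -
  obtain x where x: "vn s1 f = ennreal x" "0 \<le> x" using fin(1) by (cases "vn s1 f" rule: ennreal_cases) auto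
  obtain y where y: "vn s2 g = ennreal y" "0 \<le> y" using fin(2) by (cases "vn s2 g" rule: ennreal_cases) auto
  define e where "e n = inverse (real (Suc n))" for n
  have e0: "0 < e n" for n unfolding e_def by simp
  have le: "vn (\<lambda>x. s1 x + s2 x) (\<lambda>x. f x * g x) \<le> ennreal (3 * ((x + e n) * (y + e n)))" for n
    apply (rule vn_holder_aux[OF assms(1-7)])
    using x y e0[of n] by (auto simp: ennreal_less_iff)
  have "(\<lambda>n. 3 * ((x + e n) * (y + e n))) \<longlonglongrightarrow> 3 * ((x + 0) * (y + 0))"
    unfolding e_def by (intro tendsto_intros LIMSEQ_inverse_real_of_nat)
  then have "(\<lambda>n. ennreal (3 * ((x + e n) * (y + e n)))) \<longlonglongrightarrow> ennreal (3 * (x * y))"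
    by (intro tendsto_ennrealI) simp
  then have "vn (\<lambda>x. s1 x + s2 x) (\<lambda>x. f x * g x) \<le> ennreal (3 * (x * y))"
    by (rule LIMSEQ_le_const) (use le in auto)
  also have "\<dots> = 3 * vn s1 f * vn s2 g"
    using x y by (simp add: ennreal_mult mult.assoc)
  finally show ?thesis .
qed



lemma Ms_ind_le:
  assumes Q: "Q \<in> sets lebesgue" and s0: "\<And>x. 0 \<le> s x"
  shows "Ms s (indicator Q) \<le> emeasure lebesgue Q + 1"
  unfolding Ms_def
proof (rule add_mono)
  have "(\<integral>\<^sup>+ x. indicator {y. 0 < s y} x * ennreal (\<bar>indicator Q x :: real\<bar> powr (1 / s x)) \<partial>lebesgue)
      \<le> (\<integral>\<^sup>+ x. indicator Q x \<partial>lebesgue)"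
    by (rule nn_integral_mono) (auto simp: indicator_def)
  then show "(\<integral>\<^sup>+ x. indicator {y. 0 < s y} x * ennreal (\<bar>indicator Q x :: real\<bar> powr (1 / s x)) \<partial>lebesgue)
      \<le> emeasure lebesgue Q" using Q by simp
  show "ess_sup_leb (\<lambda>x. indicator {y. s y = 0} x * ennreal \<bar>indicator Q x :: real\<bar>) \<le> 1"
    by (rule ess_le) (auto simp: indicator_def)
qed

lemma vn_ind_fin:
  assumes Q: "Q \<in> sets lebesgue" "emeasure lebesgue Q = ennreal \<mu>" "0 \<le> \<mu>"
    and sm: "s \<in> borel_measurable lebesgue" and s01: "\<And>x. 0 \<le> s x" "\<And>x. s x \<le> 1"
  shows "vn s (indicator Q) \<le> ennreal (\<mu> + 1)"
proof -
  have "vn s (indicator Q) \<le> ennreal ((\<mu> + 1) * 1)"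
  proof (rule vn_le_scale[OF sm _ s01])
    show "indicator Q \<in> borel_measurable lebesgue" using Q by measurable
    show "Ms s (\<lambda>x. indicator Q x / 1) \<le> ennreal (\<mu> + 1)"
      using Ms_ind_le[OF Q(1) s01(1)] Q by (simp add: ennreal_plus)
  qed (use Q in auto)
  then show ?thesis by simp
qed

lemma vn_ind_small:
  assumes Q: "Q \<in> sets lebesgue" "emeasure lebesgue Q = ennreal \<mu>" "0 < \<mu>" "\<mu> \<le> 1"
    and sm: "s \<in> borel_measurable lebesgue" and s01: "\<And>x. 0 \<le> s x" "\<And>x. s x \<le> 1"
    and a: "\<And>x. x \<in> Q \<Longrightarrow> a \<le> s x"
  shows "vn s (indicator Q) \<le> ennreal (2 * \<mu> powr a)"
proof (rule vn_le_scale[OF sm _ s01])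
  show "indicator Q \<in> borel_measurable lebesgue" using Q by measurable
  show "(1::real) \<le> 2" by simp
  show "0 < \<mu> powr a" using Q by simp
  have pw: "indicator {y. 0 < s y} x * ennreal (\<bar>indicator Q x / \<mu> powr a\<bar> powr (1 / s x))
      \<le> ennreal (1 / \<mu>) * indicator Q x" for x
  proof (cases "x \<in> Q \<and> 0 < s x")
    case True
    have "\<bar>indicator Q x / \<mu> powr a\<bar> = \<mu> powr (-a)"
      using True Q by (simp add: powr_minus divide_inverse)
    then have "\<bar>indicator Q x / \<mu> powr a\<bar> powr (1 / s x) = \<mu> powr (-a * (1 / s x))"
      by (simp add: powr_powr)
    also have "\<dots> = \<mu> powr (- (a / s x))" by simp
    finally have "\<bar>indicator Q x / \<mu> powr a\<bar> powr (1 / s x) = \<mu> powr (- (a / s x))" .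
    also have "\<dots> \<le> \<mu> powr (-1)"
      apply (rule powr_mono')
      using True a[of x] Q by (auto simp: field_simps)
    also have "\<dots> = 1 / \<mu>" using Q by (simp add: powr_minus divide_inverse)
    finally show ?thesis using True by (simp add: indicator_def ennreal_leI)
  next
    case False
    then show ?thesis by (auto simp: indicator_def)
  qed
  have I: "(\<integral>\<^sup>+ x. indicator {y. 0 < s y} x * ennreal (\<bar>indicator Q x / \<mu> powr a\<bar> powr (1 / s x)) \<partial>lebesgue) \<le> 1"
  proof -
    have "(\<integral>\<^sup>+ x. indicator {y. 0 < s y} x * ennreal (\<bar>indicator Q x / \<mu> powr a\<bar> powr (1 / s x)) \<partial>lebesgue)
       \<le> (\<integral>\<^sup>+ x. ennreal (1 / \<mu>) * indicator Q x \<partial>lebesgue)"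
      by (rule nn_integral_mono) (rule pw)
    also have "\<dots> = ennreal (1 / \<mu>) * ennreal \<mu>"
      using Q by (simp add: nn_integral_cmult_indicator)
    also have "\<dots> = 1" using Q by (simp add: ennreal_mult[symmetric])
    finally show ?thesis .
  qed
  have E: "ess_sup_leb (\<lambda>x. indicator {y. s y = 0} x * ennreal \<bar>indicator Q x / \<mu> powr a\<bar>) \<le> 1"
  proof (rule ess_le, rule AE_I2)
    fix x
    show "indicator {y. s y = 0} x * ennreal \<bar>indicator Q x / \<mu> powr a\<bar> \<le> 1"
    proof (cases "x \<in> Q \<and> s x = 0")
      case True
      then have "a \<le> 0" using a by force
      then have "\<mu> powr 0 \<le> \<mu> powr a" using Q by (intro powr_mono') auto
      then have "1 \<le> \<mu> powr a" using Q by simp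
      then show ?thesis using True by (simp add: indicator_def ennreal_leI divide_le_eq)
    qed (auto simp: indicator_def)
  qed
  show "Ms s (\<lambda>x. indicator Q x / \<mu> powr a) \<le> ennreal 2"
    unfolding Ms_def using add_mono[OF I E] by simp
qed



lemma emeasure_cube:
  fixes a b :: "'a::euclidean_space"
  assumes "\<And>i. i \<in> Basis \<Longrightarrow> b \<bullet> i - a \<bullet> i = l" "0 \<le> l"
  shows "emeasure lebesgue (cbox a b) = ennreal (l ^ DIM('a))"
proof -
  have "emeasure lebesgue (cbox a b) = emeasure lborel (cbox a b)" by simp
  also have "\<dots> = ennreal (\<Prod>i\<in>Basis. (b - a) \<bullet> i)"
  proof -
    have le: "\<And>i. i \<in> Basis \<Longrightarrow> a \<bullet> i \<le> b \<bullet> i"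
      using assms by (metis diff_ge_0_iff_ge)
    show ?thesis by (subst emeasure_lborel_cbox[OF le]) auto
  qed
  also have "(\<Prod>i\<in>Basis. (b - a) \<bullet> i) = (\<Prod>i\<in>(Basis::'a set). l)"
    using assms by (intro prod.cong) (auto simp: inner_diff_left)
  also have "\<dots> = l ^ DIM('a)" by simp
  finally show ?thesis .
qed

lemma J_fin:
  "(\<integral>\<^sup>+ x. ennreal ((exp 1 + norm x) powr (- real (Suc DIM('a)))) \<partial>(lebesgue :: 'a::euclidean_space measure)) < \<infinity>"
proof -
  define n where "n = DIM('a)"
  define m where "m = Suc n"
  define B :: "nat \<Rightarrow> 'a set" where "B k = cbox (- ((2::real) ^ k) *\<^sub>R One) ((2 ^ k) *\<^sub>R One)" for k
  define a :: "nat \<Rightarrow> real" where "a k = 2 ^ m / 2 ^ (k * m)" for k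
  have Bm: "B k \<in> sets lebesgue" for k unfolding B_def by simp
  have emB: "emeasure lebesgue (B k) = ennreal ((2 * 2 ^ k) ^ n)" for k
    unfolding B_def n_def by (rule emeasure_cube) (auto simp: inner_diff_left)
  have a_pos: "0 \<le> a k" for k unfolding a_def by simp
  have inB: "x \<in> B k" if "norm x \<le> 2 ^ k" for x k
    unfolding B_def mem_box
  proof (intro ballI conjI)
    fix i :: 'a assume i: "i \<in> Basis"
    have "\<bar>x \<bullet> i\<bar> \<le> 2 ^ k" using Basis_le_norm[OF i, of x] that by simp
    then show "(- ((2::real) ^ k) *\<^sub>R One) \<bullet> i \<le> x \<bullet> i" "x \<bullet> i \<le> ((2::real) ^ k *\<^sub>R One) \<bullet> i"
      using i by auto
  qed
  have term_le: "ennreal (a k) * indicator (B k) x \<le> (\<Sum>j. ennreal (a j) * indicator (B j) x)" for k x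
  proof -
    have "(\<Sum>j\<in>{k}. ennreal (a j) * indicator (B j) x) \<le> (\<Sum>j. ennreal (a j) * indicator (B j) x)"
      by (rule sum_le_suminf) auto
    then show ?thesis by (metis add.right_neutral empty_iff finite.emptyI sum.empty sum.insert)
  qed
  have pw: "ennreal ((exp 1 + norm x) powr (- real m)) \<le> (\<Sum>j. ennreal (a j) * indicator (B j) x)" for x
  proof (cases "norm x \<le> 1")
    case True
    have "(exp 1 + norm x) powr (- real m) \<le> 1"
    proof -
      have "1 \<le> (exp 1 + norm x) powr (real m)"
        by (rule ge_one_powr_ge_zero) (use exp_ge_add_one_self[of 1] norm_ge_zero[of x] in linarith, simp)
      then show ?thesis by (simp add: powr_minus inverse_le_1_iff)
    qed
    also have "1 \<le> a 0" unfolding a_def by simp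
    finally have "ennreal ((exp 1 + norm x) powr (- real m)) \<le> ennreal (a 0) * indicator (B 0) x"
      using inB[of x 0] True by (simp add: ennreal_leI)
    then show ?thesis using term_le order.trans by blast
  next
    case False
    define k where "k = nat \<lceil>log 2 (norm x)\<rceil>"
    have lpos: "0 < log 2 (norm x)" using False by (subst zero_less_log_cancel_iff) auto
    have k1: "1 \<le> k" using lpos unfolding k_def by linarith
    have kge: "log 2 (norm x) \<le> real k" unfolding k_def using lpos by (simp add: of_nat_nat)
    have klt: "real k - 1 < log 2 (norm x)" unfolding k_def using lpos ceiling_correct[of "log 2 (norm x)"] by (simp add: of_nat_nat)
    have "norm x \<le> 2 ^ k"
    proof -
      have "norm x = 2 powr (log 2 (norm x))" using False by (subst powr_log_cancel) auto
      also have "\<dots> \<le> 2 powr (real k)" using kge by (intro powr_mono) auto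
      finally show ?thesis by (simp add: powr_realpow)
    qed
    then have xB: "x \<in> B k" by (rule inB)
    have low: "2 ^ (k - 1) < norm x"
    proof -
      have "(2::real) ^ (k - 1) = 2 powr (real k - 1)" using k1 by (simp add: powr_realpow[symmetric] of_nat_diff)
      also have "\<dots> < 2 powr (log 2 (norm x))" using klt by (intro powr_less_mono) auto
      also have "\<dots> = norm x" using False by (subst powr_log_cancel) auto
      finally show ?thesis .
    qed
    have "(exp 1 + norm x) powr (- real m) \<le> (2 ^ (k - 1)) powr (- real m)"
      apply (rule powr_mono2')
        apply simp
       apply simp
      using low exp_gt_zero[of 1] by linarith
    also have "\<dots> = 1 / 2 ^ ((k - 1) * m)"
      by (simp add: powr_minus powr_realpow divide_inverse power_mult)
    also have "\<dots> = a k"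
    proof -
      have "k * m = (k - 1) * m + m" using k1 by (cases k) auto
      then show ?thesis unfolding a_def by (simp add: power_add)
    qed
    finally have "ennreal ((exp 1 + norm x) powr (- real m)) \<le> ennreal (a k) * indicator (B k) x"
      using xB by (simp add: ennreal_leI)
    then show ?thesis using term_le order.trans by blast
  qed
  have "(\<integral>\<^sup>+ x. ennreal ((exp 1 + norm x) powr (- real m)) \<partial>(lebesgue :: 'a measure))
      \<le> (\<integral>\<^sup>+ x. (\<Sum>j. ennreal (a j) * indicator (B j) x) \<partial>lebesgue)"
    by (intro nn_integral_mono pw)
  also have "\<dots> = (\<Sum>j. \<integral>\<^sup>+ x. ennreal (a j) * indicator (B j) x \<partial>lebesgue)"
    by (rule nn_integral_suminf) (use Bm in measurable)
  also have "\<dots> = (\<Sum>j. ennreal (2 ^ (m + n) * (1 / 2) ^ j))"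
  proof (rule suminf_cong)
    fix j
    have "(\<integral>\<^sup>+ x. ennreal (a j) * indicator (B j) x \<partial>lebesgue) = ennreal (a j) * ennreal ((2 * 2 ^ j) ^ n)"
      using Bm by (simp add: nn_integral_cmult_indicator emB)
    also have "\<dots> = ennreal (a j * (2 * 2 ^ j) ^ n)" using a_pos by (simp add: ennreal_mult)
    also have "a j * (2 * 2 ^ j) ^ n = 2 ^ (m + n) * (1 / 2) ^ j"
    proof -
      have "j * m = j * n + j" unfolding m_def by simp
      then have e1: "(2::real) ^ (j * m) = 2 ^ (j * n) * 2 ^ j" by (simp add: power_add)
      have e2: "(2 * 2 ^ j :: real) ^ n = 2 ^ n * 2 ^ (j * n)"
        by (simp add: power_mult_distrib power_mult)
      show ?thesis unfolding a_def e1 e2 power_one_over by (simp add: power_add)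
    qed
    finally show "(\<integral>\<^sup>+ x. ennreal (a j) * indicator (B j) x \<partial>lebesgue) = ennreal (2 ^ (m + n) * (1 / 2) ^ j)" .
  qed
  also have "\<dots> < \<infinity>"
  proof -
    have sm: "summable (\<lambda>j. 2 ^ (m + n) * (1 / 2 :: real) ^ j)"
      by (intro summable_mult summable_geometric) simp
    have "(\<Sum>j. ennreal (2 ^ (m + n) * (1 / 2) ^ j)) \<noteq> \<infinity>"
      unfolding infinity_ennreal_def by (rule ennreal_suminf_neq_top[OF sm]) (simp only: zero_le_mult_iff zero_le_power zero_le_divide_iff, simp)
    then show ?thesis by (simp add: less_top)
  qed
  finally show ?thesis unfolding m_def n_def .
qed



lemma decay_pt:
  fixes s sinf c m mu L :: real
  assumes s: "0 < s" and si: "0 \<le> sinf" and c: "0 \<le> c" and L: "1 \<le> L"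
    and d: "s - sinf \<le> c / L" and mu: "1 \<le> mu" and m: "0 \<le> m"
  shows "(1 / (exp (m * c + 1) * mu powr sinf)) powr (1 / s) \<le> exp (m * c / sinf) / mu + exp (- (m * L))"
proof -
  define u where "u = m * c + 1 + sinf * ln mu"
  have lnmu: "0 \<le> ln mu" using mu by simp
  have u1: "m * c + 1 \<le> u" unfolding u_def using si lnmu by simp
  have mc0: "0 \<le> m * c" using m c by simp
  have upos: "0 < u" using u1 mc0 by linarith
  have "exp (m * c + 1) * mu powr sinf = exp u"
    unfolding u_def using mu by (simp add: powr_def exp_add)
  then have "(1 / (exp (m * c + 1) * mu powr sinf)) powr (1 / s) = exp (- u) powr (1 / s)"
    by (simp add: exp_minus divide_inverse)
  also have "\<dots> = exp (- (u / s))" by (simp add: powr_def)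
  finally have lhs: "(1 / (exp (m * c + 1) * mu powr sinf)) powr (1 / s) = exp (- (u / s))" .
  have D0: "0 \<le> exp (m * c / sinf) / mu" using mu by simp
  show ?thesis
  proof (cases "m * L \<le> u / s")
    case True
    then have "exp (- (u / s)) \<le> exp (- (m * L))" by simp
    then show ?thesis using lhs D0 by linarith
  next
    case False
    then have us: "u / s < m * L" by simp
    then have us2: "u < m * L * s" using s by (simp add: divide_less_eq)
    show ?thesis
    proof (cases "sinf = 0")
      case True
      then have "s \<le> c / L" using d by simp
      then have "s * L \<le> c" using L by (simp add: le_divide_eq)
      then have "m * L * s \<le> m * c" using m mult_left_mono[of "s * L" c m] by (simp add: algebra_simps)
      then have False using us2 u1 by linarith
      then show ?thesis ..
    next
      case False
      then have sip: "0 < sinf" using si by simp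
      have key: "u * (s - sinf) / s \<le> m * c"
      proof (cases "s \<le> sinf")
        case True
        have "u * (s - sinf) \<le> 0" using True upos by (simp add: mult_nonneg_nonpos)
        then show ?thesis using s mc0 by (meson divide_nonpos_pos order.trans)
      next
        case False
        have "u * (s - sinf) / s = (u / s) * (s - sinf)" by simp
        also have "\<dots> \<le> (m * L) * (c / L)"
          apply (rule mult_mono) using us d False upos s L m by (auto simp: less_imp_le)
        also have "\<dots> = m * c" using L by simp
        finally show ?thesis .
      qed
      have "- (u / s) \<le> m * c / sinf - u / sinf"
      proof -
        have "u / sinf - u / s = (u * (s - sinf) / s) / sinf"
          using s sip by (simp add: field_simps)
        also have "\<dots> \<le> m * c / sinf" using divide_right_mono[OF key, of sinf] sip by simp
        finally show ?thesis by simp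
      qed
      then have "exp (- (u / s)) \<le> exp (m * c / sinf - u / sinf)" by simp
      also have "\<dots> = exp (m * c / sinf) * exp (- (u / sinf))" by (simp add: exp_diff exp_minus divide_inverse)
      also have "exp (- (u / sinf)) \<le> exp (- ln mu)"
      proof -
        have "sinf * ln mu \<le> u" unfolding u_def using mc0 by simp
        then have "ln mu \<le> u / sinf" using sip by (simp add: le_divide_eq mult.commute)
        then show ?thesis by simp
      qed
      also have "exp (- ln mu) = 1 / mu" using mu by (simp add: exp_minus divide_inverse)
      finally have "exp (- (u / s)) \<le> exp (m * c / sinf) / mu" by simp
      then show ?thesis using lhs by (smt (verit) exp_gt_zero)
    qed
  qed
qed



lemma vn_ind_large:
  fixes s :: "'a::euclidean_space \<Rightarrow> real"
  assumes sm: "s \<in> borel_measurable lebesgue" and s01: "\<And>x. 0 \<le> s x" "\<And>x. s x \<le> 1"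
    and si: "0 \<le> sinf" and c: "0 \<le> c" and dec: "\<And>x. s x - sinf \<le> c / ln (exp 1 + norm x)"
  shows "\<exists>B K. 0 < K \<and> 1 \<le> B \<and> (\<forall>Q \<mu>. Q \<in> sets lebesgue \<longrightarrow> emeasure lebesgue Q = ennreal \<mu> \<longrightarrow> 1 \<le> \<mu>
      \<longrightarrow> vn s (indicator Q) \<le> ennreal (B * (K * \<mu> powr sinf)))"
proof -
  define m where "m = real (Suc DIM('a))"
  have m0: "0 \<le> m" unfolding m_def by simp
  obtain Jr where J: "(\<integral>\<^sup>+ x. ennreal ((exp 1 + norm x) powr (- m)) \<partial>(lebesgue :: 'a measure)) = ennreal Jr" "0 \<le> Jr"
    using J_fin[where 'a='a] unfolding m_def[symmetric]
    by (cases "(\<integral>\<^sup>+ x. ennreal ((exp 1 + norm x) powr (- m)) \<partial>(lebesgue :: 'a measure))" rule: ennreal_cases) auto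
  define K where "K = exp (m * c + 1)"
  define D where "D = exp (m * c / sinf)"
  define B where "B = D + Jr + 1"
  have K1: "1 \<le> K" unfolding K_def using m0 c by simp
  have B1: "1 \<le> B" unfolding B_def D_def using J(2) by (smt (verit) exp_gt_zero)
  show ?thesis
  proof (intro exI conjI allI impI)
    show "0 < K" using K1 by simp
    show "1 \<le> B" by (rule B1)
    fix Q :: "'a set" and \<mu> :: real assume Q: "Q \<in> sets lebesgue" "emeasure lebesgue Q = ennreal \<mu>" "1 \<le> \<mu>"
    define t where "t = K * \<mu> powr sinf"
    have mupow: "1 \<le> \<mu> powr sinf" using Q(3) si by (rule ge_one_powr_ge_zero)
    have t1: "1 \<le> t" unfolding t_def using K1 mupow
      by (metis mult_mono' one_le_mult_iff order.trans zero_le_one mult_1_left)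
    have pw: "indicator {y. 0 < s y} x * ennreal (\<bar>indicator Q x / t\<bar> powr (1 / s x))
        \<le> ennreal (D / \<mu>) * indicator Q x + ennreal ((exp 1 + norm x) powr (- m))" for x
    proof (cases "x \<in> Q \<and> 0 < s x")
      case True
      define L where "L = ln (exp 1 + norm x)"
      have L1: "1 \<le> L" unfolding L_def
        using ln_mono[of "exp 1" "exp 1 + norm x"] by simp
      have ab: "\<bar>indicator Q x / t\<bar> = 1 / (exp (m * c + 1) * \<mu> powr sinf)"
        using True t1 unfolding t_def K_def by simp
      have "\<bar>indicator Q x / t\<bar> powr (1 / s x) \<le> D / \<mu> + exp (- (m * L))"
        unfolding D_def ab
        by (rule decay_pt[OF _ si c L1 _ Q(3) m0]) (use True in \<open>auto simp: L_def dec\<close>)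
      also have "exp (- (m * L)) = (exp 1 + norm x) powr (- m)"
        unfolding L_def powr_def using add_pos_nonneg[OF exp_gt_zero[of 1] norm_ge_zero[of x]] by simp
      finally have "ennreal (\<bar>indicator Q x / t\<bar> powr (1 / s x)) \<le> ennreal (D / \<mu> + (exp 1 + norm x) powr (- m))"
        by (rule ennreal_leI)
      also have "\<dots> = ennreal (D / \<mu>) + ennreal ((exp 1 + norm x) powr (- m))"
        using Q(3) unfolding D_def by (intro ennreal_plus) auto
      finally show ?thesis using True by (simp add: indicator_def)
    next
      case False
      then show ?thesis by (auto simp: indicator_def)
    qed
    have I: "(\<integral>\<^sup>+ x. indicator {y. 0 < s y} x * ennreal (\<bar>indicator Q x / t\<bar> powr (1 / s x)) \<partial>lebesgue)
        \<le> ennreal (D + Jr)"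
    proof -
      have "(\<integral>\<^sup>+ x. indicator {y. 0 < s y} x * ennreal (\<bar>indicator Q x / t\<bar> powr (1 / s x)) \<partial>lebesgue)
        \<le> (\<integral>\<^sup>+ x. ennreal (D / \<mu>) * indicator Q x + ennreal ((exp 1 + norm x) powr (- m)) \<partial>lebesgue)"
        by (intro nn_integral_mono pw)
      also have "\<dots> = (\<integral>\<^sup>+ x. ennreal (D / \<mu>) * indicator Q x \<partial>lebesgue)
           + (\<integral>\<^sup>+ x. ennreal ((exp 1 + norm x) powr (- m)) \<partial>(lebesgue :: 'a measure))"
      proof (rule nn_integral_add)
        show "(\<lambda>x. ennreal (D / \<mu>) * indicator Q x) \<in> borel_measurable lebesgue" using Q(1) by measurable
        show "(\<lambda>x::'a. ennreal ((exp 1 + norm x) powr (- m))) \<in> borel_measurable lebesgue" by measurable (simp_all add: id_def[symmetric])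
      qed
      also have "\<dots> = ennreal (D / \<mu>) * ennreal \<mu> + ennreal Jr"
        using Q J by (simp add: nn_integral_cmult_indicator)
      also have "\<dots> = ennreal (D + Jr)"
        using Q(3) J(2) unfolding D_def by (simp add: ennreal_mult[symmetric] ennreal_plus)
      finally show ?thesis .
    qed
    have E: "ess_sup_leb (\<lambda>x. indicator {y. s y = 0} x * ennreal \<bar>indicator Q x / t\<bar>) \<le> 1"
      by (rule ess_le, rule AE_I2) (use t1 in \<open>auto simp: indicator_def divide_le_eq\<close>)
    have "vn s (indicator Q) \<le> ennreal (B * t)"
    proof (rule vn_le_scale[OF sm _ s01])
      show "indicator Q \<in> borel_measurable lebesgue" using Q(1) by measurable
      show "1 \<le> B" by (rule B1)
      show "0 < t" using t1 by simp
      show "Ms s (\<lambda>x. indicator Q x / t) \<le> ennreal B"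
        unfolding Ms_def B_def using add_mono[OF I E] J(2) unfolding D_def
        by (simp add: ennreal_plus)
    qed
    then show "vn s (indicator Q) \<le> ennreal (B * (K * \<mu> powr sinf))" unfolding t_def .
  qed
qed



lemma ennreal_mult_le:
  assumes "X \<le> ennreal x" "Y \<le> ennreal y" "0 \<le> x" "0 \<le> y"
  shows "X * Y \<le> ennreal (x * y)"
  using mult_mono[OF assms(1,2)] assms(3,4) by (simp add: ennreal_mult)

lemma small_pow:
  fixes l c0 :: real and n :: nat
  assumes n: "1 \<le> n" and l: "0 < l" "l \<le> 1 / (4 * real n ^ 2)" and c0: "0 \<le> c0"
  shows "(l ^ n) powr (- 2 * (c0 / (- ln (real n * l)))) \<le> exp (4 * c0 * real n)"
proof -
  define A where "A = - ln l"
  define N where "N = ln (real n)"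
  have N0: "0 \<le> N" unfolding N_def using n by simp
  have l1: "l < 1"
  proof -
    have n2: "1 \<le> real n ^ 2" using n one_le_power[of "real n" 2] by simp
    then have "1 / (4 * real n ^ 2) < 1" by (simp add: divide_less_eq)
    then show ?thesis using l by simp
  qed
  have A0: "0 < A" unfolding A_def using l l1 by simp
  have "l \<le> 1 / real n ^ 2"
  proof -
    have n2: "1 \<le> real n ^ 2" using n one_le_power[of "real n" 2] by simp
    have "1 / (4 * real n ^ 2) \<le> 1 / real n ^ 2" using n2 n by (intro divide_left_mono) auto
    then show ?thesis using l(2) by linarith
  qed
  then have "ln l \<le> ln (1 / real n ^ 2)" using l n by (subst ln_le_cancel_iff) auto
  also have "ln (1 / real n ^ 2) = - 2 * N" unfolding N_def using n by (simp add: ln_div ln_realpow)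
  finally have AN: "2 * N \<le> A" unfolding A_def by simp
  have lnnl: "- ln (real n * l) = A - N" unfolding A_def N_def using n l by (simp add: ln_mult)
  have AN2: "A / 2 \<le> A - N" using AN by simp
  have ANpos: "0 < A - N" using AN2 A0 by simp
  have "(l ^ n) powr (- 2 * (c0 / (- ln (real n * l)))) = exp ((- 2 * (c0 / (A - N))) * (real n * (- A)))"
    unfolding lnnl powr_def using l by (simp add: ln_realpow A_def)
  also have "(- 2 * (c0 / (A - N))) * (real n * (- A)) = 2 * c0 * real n * (A / (A - N))"
    by (simp add: field_simps)
  also have "A / (A - N) \<le> 2" using AN2 ANpos by (simp add: divide_le_eq)
  then have "2 * c0 * real n * (A / (A - N)) \<le> 2 * c0 * real n * 2"
    using c0 by (intro mult_left_mono) auto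
  then have "exp (2 * c0 * real n * (A / (A - N))) \<le> exp (4 * c0 * real n)" by simp
  finally show ?thesis .
qed

lemma cube_dist:
  fixes a b x y :: "'a::euclidean_space"
  assumes "\<And>i. i \<in> Basis \<Longrightarrow> b \<bullet> i - a \<bullet> i = l" "x \<in> cbox a b" "y \<in> cbox a b"
  shows "dist x y \<le> real DIM('a) * l"
proof -
  have "dist x y = norm (x - y)" by (simp add: dist_norm)
  also have "\<dots> \<le> (\<Sum>i\<in>Basis. \<bar>(x - y) \<bullet> i\<bar>)" by (rule norm_le_l1)
  also have "\<dots> \<le> (\<Sum>i\<in>(Basis::'a set). l)"
  proof (rule sum_mono)
    fix i :: 'a assume i: "i \<in> Basis"
    have "a \<bullet> i \<le> x \<bullet> i" "x \<bullet> i \<le> b \<bullet> i" "a \<bullet> i \<le> y \<bullet> i" "y \<bullet> i \<le> b \<bullet> i"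
      using assms(2,3) i by (auto simp: mem_box)
    then show "\<bar>(x - y) \<bullet> i\<bar> \<le> l" using assms(1)[OF i] by (simp add: inner_diff_left)
  qed
  also have "\<dots> = real DIM('a) * l" by simp
  finally show ?thesis .
qed



lemma cube_key:
  fixes s :: "'a::euclidean_space \<Rightarrow> real"
  assumes sm: "s \<in> borel_measurable lebesgue" and s01: "\<And>x. 0 \<le> s x" "\<And>x. s x \<le> 1"
    and loc: "\<And>x y. 0 < dist x y \<Longrightarrow> dist x y < 1/2 \<Longrightarrow> \<bar>s x - s y\<bar> \<le> c0 / (- ln (dist x y))"
    and dec: "\<And>x. \<bar>s x - sinf\<bar> \<le> c / ln (exp 1 + norm x)" and si: "0 \<le> sinf" "sinf \<le> 1"
  shows "\<exists>K. \<forall>Q. is_cube Q \<longrightarrow> vn s (indicator Q) * vn (\<lambda>x. 1 - s x) (indicator Q) \<le> ennreal K * emeasure lebesgue Q"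
proof -
  define c' where "c' = max c 0"
  define c0' where "c0' = max c0 0"
  define n where "n = DIM('a)"
  have n1: "1 \<le> n" unfolding n_def by (simp add: DIM_positive Suc_leI)
  have Lpos: "0 < ln (exp 1 + norm x)" for x :: 'a
  proof -
    have "1 < exp 1 + norm x" using exp_gt_one[of 1] norm_ge_zero[of x] by linarith
    then show ?thesis by simp
  qed
  have dec1: "s x - sinf \<le> c' / ln (exp 1 + norm x)" for x
    using dec[of x] Lpos[of x] unfolding c'_def
    by (smt (verit) divide_right_mono max.cobounded1)
  have dec2: "(1 - s x) - (1 - sinf) \<le> c' / ln (exp 1 + norm x)" for x
    using dec[of x] Lpos[of x] unfolding c'_def
    by (smt (verit) divide_right_mono max.cobounded1)
  have c'0: "0 \<le> c'" unfolding c'_def by simp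
  have c0'0: "0 \<le> c0'" unfolding c0'_def by simp
  have s1m: "(\<lambda>x. 1 - s x) \<in> borel_measurable lebesgue" using sm by measurable
  have s101: "\<And>x. 0 \<le> 1 - s x" "\<And>x. 1 - s x \<le> 1" using s01 by auto
  obtain B1 K1 where BK1: "0 < K1" "1 \<le> B1"
    "\<And>Q \<mu>. Q \<in> sets lebesgue \<Longrightarrow> emeasure lebesgue Q = ennreal \<mu> \<Longrightarrow> 1 \<le> \<mu>
      \<Longrightarrow> vn s (indicator Q) \<le> ennreal (B1 * (K1 * \<mu> powr sinf))"
    using vn_ind_large[OF sm s01 si(1) c'0 dec1] by blast
  obtain B2 K2 where BK2: "0 < K2" "1 \<le> B2"
    "\<And>Q \<mu>. Q \<in> sets lebesgue \<Longrightarrow> emeasure lebesgue Q = ennreal \<mu> \<Longrightarrow> 1 \<le> \<mu>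
      \<Longrightarrow> vn (\<lambda>x. 1 - s x) (indicator Q) \<le> ennreal (B2 * (K2 * \<mu> powr (1 - sinf)))"
    using vn_ind_large[OF s1m s101 _ c'0 dec2] si(2) by auto
  define l0 :: real where "l0 = 1 / (4 * real n ^ 2)"
  have l0pos: "0 < l0" unfolding l0_def using n1 by simp
  have l01: "l0 \<le> 1"
  proof -
    have n2: "1 \<le> real n ^ 2" using n1 one_le_power[of "real n" 2] by simp
    then show ?thesis unfolding l0_def by (simp add: divide_le_eq)
  qed
  define K where "K = max (4 * exp (4 * c0' * real n)) (max (4 / l0 ^ n) (B1 * K1 * (B2 * K2)))"
  show ?thesis
  proof (intro exI allI impI)
    fix Q :: "'a set" assume "is_cube Q"
    then obtain a b l where abl: "0 < l" "\<And>i. i \<in> Basis \<Longrightarrow> b \<bullet> i - a \<bullet> i = l" "Q = cbox a b"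
      unfolding is_cube_def by blast
    define \<mu> where "\<mu> = l ^ n"
    have Qm: "Q \<in> sets lebesgue" using abl by simp
    have emQ: "emeasure lebesgue Q = ennreal \<mu>"
      unfolding abl(3) \<mu>_def n_def by (rule emeasure_cube) (use abl in auto)
    have mupos: "0 < \<mu>" unfolding \<mu>_def using abl by simp
    have aQ: "a \<in> Q"
    proof -
      have "\<And>i. i \<in> Basis \<Longrightarrow> a \<bullet> i \<le> b \<bullet> i" using abl by (metis diff_ge_0_iff_ge less_imp_le)
      then show ?thesis unfolding abl(3) by (auto simp: mem_box)
    qed
    have goal: "vn s (indicator Q) * vn (\<lambda>x. 1 - s x) (indicator Q) \<le> ennreal (K * \<mu>)"
    proof (cases "l \<le> 1")
      case True
      then have mu1: "\<mu> \<le> 1" unfolding \<mu>_def using abl by (simp add: power_le_one)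
      show ?thesis
      proof (cases "l \<le> l0")
        case True
        define \<delta> where "\<delta> = c0' / (- ln (real n * l))"
        have nl: "real n * l < 1 / 2"
        proof -
          have "real n * l \<le> real n * l0" using True n1 by (simp add: mult_left_mono)
          also have "real n * l0 = 1 / (4 * real n)" unfolding l0_def using n1 by (simp add: power2_eq_square)
          also have "\<dots> < 1 / 2" using n1 by (simp add: divide_less_eq)
          finally show ?thesis .
        qed
        have nlpos: "0 < real n * l" using n1 abl by simp
        have osc: "\<bar>s x - s a\<bar> \<le> \<delta>" if "x \<in> Q" for x
        proof (cases "x = a")
          case True
          have "ln (real n * l) < 0" using nl nlpos by simp
          then show ?thesis unfolding \<delta>_def using c0'0 True
            by (simp add: divide_nonneg_neg)
        next
          case False
          have d: "dist x a \<le> real n * l" unfolding n_def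
            by (rule cube_dist[OF abl(2)]) (use that aQ abl(3) in auto)
          have dpos: "0 < dist x a" using False by simp
          have "\<bar>s x - s a\<bar> \<le> c0 / (- ln (dist x a))" by (rule loc[OF dpos]) (use d nl in linarith)
          also have "\<dots> \<le> c0' / (- ln (dist x a))"
            unfolding c0'_def using d nl dpos by (intro divide_right_mono) (auto simp: ln_less_zero)
          also have "\<dots> \<le> \<delta>" unfolding \<delta>_def
          proof (rule divide_left_mono)
            show "0 \<le> c0'" by (rule c0'0)
            show "- ln (real n * l) \<le> - ln (dist x a)" using ln_mono[OF d dpos] by simp
            show "0 < - ln (dist x a) * - ln (real n * l)"
              using d dpos nl nlpos by (intro mult_pos_pos) (auto simp: ln_less_zero)
          qed
          finally show ?thesis .
        qed
        have v1: "vn s (indicator Q) \<le> ennreal (2 * \<mu> powr (s a - \<delta>))"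
          by (rule vn_ind_small[OF Qm emQ mupos mu1 sm s01]) (use osc in force)
        have v2: "vn (\<lambda>x. 1 - s x) (indicator Q) \<le> ennreal (2 * \<mu> powr ((1 - s a) - \<delta>))"
          by (rule vn_ind_small[OF Qm emQ mupos mu1 s1m s101]) (use osc in force)
        have "vn s (indicator Q) * vn (\<lambda>x. 1 - s x) (indicator Q)
            \<le> ennreal ((2 * \<mu> powr (s a - \<delta>)) * (2 * \<mu> powr ((1 - s a) - \<delta>)))"
          by (rule ennreal_mult_le[OF v1 v2]) auto
        also have "(2 * \<mu> powr (s a - \<delta>)) * (2 * \<mu> powr ((1 - s a) - \<delta>)) = 4 * \<mu> * \<mu> powr (- 2 * \<delta>)"
        proof -
          have "(2 * \<mu> powr (s a - \<delta>)) * (2 * \<mu> powr ((1 - s a) - \<delta>)) = 4 * \<mu> powr (1 + (- 2 * \<delta>))"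
            by (simp add: powr_add[symmetric] algebra_simps)
          also have "\<dots> = 4 * \<mu> * \<mu> powr (- 2 * \<delta>)" using mupos by (subst powr_add) simp
          finally show ?thesis .
        qed
        also have "\<dots> \<le> 4 * \<mu> * exp (4 * c0' * real n)"
        proof -
          have "\<mu> powr (- 2 * \<delta>) \<le> exp (4 * c0' * real n)"
            unfolding \<mu>_def \<delta>_def using small_pow[OF n1 abl(1) _ c0'0] True unfolding l0_def by simp
          then show ?thesis using mupos by simp
        qed
        also have "\<dots> \<le> K * \<mu>" unfolding K_def using mupos
          by (simp add: mult.commute mult_right_mono)
        finally show ?thesis by (simp add: ennreal_leI)
      next
        case False
        have v1: "vn s (indicator Q) \<le> ennreal (2 * \<mu> powr 0)"
          by (rule vn_ind_small[OF Qm emQ mupos mu1 sm s01]) (use s01 in auto)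
        have v2: "vn (\<lambda>x. 1 - s x) (indicator Q) \<le> ennreal (2 * \<mu> powr 0)"
          by (rule vn_ind_small[OF Qm emQ mupos mu1 s1m s101]) (use s101 in auto)
        have "vn s (indicator Q) * vn (\<lambda>x. 1 - s x) (indicator Q) \<le> ennreal ((2 * \<mu> powr 0) * (2 * \<mu> powr 0))"
          by (rule ennreal_mult_le[OF v1 v2]) auto
        also have "(2 * \<mu> powr 0) * (2 * \<mu> powr 0) = 4" using mupos by simp
        also have "4 \<le> 4 / l0 ^ n * \<mu>"
        proof -
          have "l0 ^ n \<le> \<mu>" unfolding \<mu>_def using False l0pos by (simp add: power_mono)
          then show ?thesis using l0pos by (simp add: field_simps)
        qed
        also have "4 / l0 ^ n * \<mu> \<le> K * \<mu>" unfolding K_def using mupos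
          by (intro mult_right_mono) auto
        finally show ?thesis by (simp add: ennreal_leI)
      qed
    next
      case False
      then have mu1: "1 \<le> \<mu>" unfolding \<mu>_def by (simp add: one_le_power)
      have "vn s (indicator Q) * vn (\<lambda>x. 1 - s x) (indicator Q)
          \<le> ennreal ((B1 * (K1 * \<mu> powr sinf)) * (B2 * (K2 * \<mu> powr (1 - sinf))))"
        by (rule ennreal_mult_le[OF BK1(3)[OF Qm emQ mu1] BK2(3)[OF Qm emQ mu1]]) (use BK1 BK2 in auto)
      also have "(B1 * (K1 * \<mu> powr sinf)) * (B2 * (K2 * \<mu> powr (1 - sinf))) = B1 * K1 * (B2 * K2) * \<mu>"
      proof -
        have "\<mu> powr sinf * \<mu> powr (1 - sinf) = \<mu>" using mupos by (simp add: powr_add[symmetric])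
        then show ?thesis by (simp add: algebra_simps)
      qed
      also have "\<dots> \<le> K * \<mu>" unfolding K_def using mupos by (intro mult_right_mono) auto
      finally show ?thesis by (simp add: ennreal_leI)
    qed
    show "vn s (indicator Q) * vn (\<lambda>x. 1 - s x) (indicator Q) \<le> ennreal K * emeasure lebesgue Q"
    proof -
      have "0 \<le> K" unfolding K_def by (rule order.trans[OF _ max.cobounded1]) simp
      then show ?thesis using goal emQ mupos by (simp add: ennreal_mult)
    qed
  qed
qed



lemma combine:
  fixes X Y Z R R' M :: ennreal
  assumes XY: "X * Y \<le> ennreal C * R" and R: "R < \<infinity>" and RR: "R * R' \<le> ennreal K * M"
    and H: "Y < \<infinity> \<Longrightarrow> Z \<le> 3 * Y * R'"
  shows "X * Z \<le> ennreal (3 * max C 0 * max K 0) * M"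
proof (cases "X = 0")
  case True
  then show ?thesis by simp
next
  case False
  have "ennreal C * R < \<infinity>" using R by (simp add: ennreal_mult_less_top)
  then have "X * Y < \<infinity>" using XY by (rule le_less_trans[rotated])
  then have Yf: "Y < \<infinity>" using False by (auto simp: ennreal_mult_less_top top.not_eq_extremum)
  have "X * Z \<le> X * (3 * Y * R')" by (rule mult_left_mono[OF H[OF Yf]]) simp
  also have "\<dots> = 3 * (X * Y) * R'" by (simp add: ac_simps)
  also have "\<dots> \<le> 3 * (ennreal C * R) * R'" by (intro mult_right_mono mult_left_mono XY) auto
  also have "\<dots> = 3 * ennreal C * (R * R')" by (simp add: ac_simps)
  also have "\<dots> \<le> 3 * ennreal C * (ennreal K * M)" by (intro mult_left_mono RR) auto
  also have "\<dots> \<le> 3 * ennreal (max C 0) * (ennreal (max K 0) * M)"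
    by (intro mult_mono ennreal_leI) auto
  also have "\<dots> = ennreal (3 * max C 0 * max K 0) * M"
  proof -
    have "ennreal (3 * max C 0 * max K 0) = ennreal 3 * ennreal (max C 0) * ennreal (max K 0)"
      by (simp add: ennreal_mult)
    then show ?thesis by (simp add: ac_simps)
  qed
  finally show ?thesis .
qed

theorem mainTheorem9:
  fixes p r :: "'a::euclidean_space \<Rightarrow> ereal" and w :: "'a \<Rightarrow> real"
  assumes "var_exp_log p" and "var_exp_log r"
    and "\<forall>x. r x \<le> p x"
    and "weight w"
    and "AA_var p r w"
  shows "A_var p w \<and> A_var (quot_exp p r) (\<lambda>x. inverse (w x))"
proof -
  have pm: "p \<in> borel_measurable lebesgue" and p1: "\<And>x. 1 \<le> p x"
    using assms(1) unfolding var_exp_log_def var_exp_def by auto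
  have rm: "r \<in> borel_measurable lebesgue" and r1: "\<And>x. 1 \<le> r x"
    using assms(2) unfolding var_exp_log_def var_exp_def by auto
  obtain c0 where loc: "\<And>x y. 0 < dist x y \<Longrightarrow> dist x y < 1/2 \<Longrightarrow> \<bar>recip r x - recip r y\<bar> \<le> c0 / (- ln (dist x y))"
    using assms(2) unfolding var_exp_log_def by blast
  obtain cinf pinf where pinf: "1 \<le> pinf" and dec0: "\<And>x. \<bar>recip r x - recip (\<lambda>_. pinf) x\<bar> \<le> cinf / ln (exp 1 + norm x)"
    using assms(2) unfolding var_exp_log_def by blast
  define sinf where "sinf = recip (\<lambda>_::'a. pinf) 0"
  have sinf_eq: "recip (\<lambda>_. pinf) x = sinf" for x unfolding sinf_def recip_def by simp
  have si: "0 \<le> sinf" "sinf \<le> 1" unfolding sinf_def using recip_ge1[of "\<lambda>_. pinf"] pinf by auto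
  have wm: "w \<in> borel_measurable lebesgue" using assms(4) unfolding weight_def by auto
  obtain C where AA: "\<And>Q. is_cube Q \<Longrightarrow> vnorm p (\<lambda>x. indicator Q x * w x) *
      vnorm (quot_exp p r) (\<lambda>x. indicator Q x * inverse (w x)) \<le> ennreal C * vnorm r (indicator Q)"
    using assms(5) unfolding AA_var_def by blast
  define sp where "sp = recip p"
  define sr where "sr = recip r"
  define sq where "sq = (\<lambda>x. sr x - sp x)"
  have spm: "sp \<in> borel_measurable lebesgue" unfolding sp_def by (rule recip_meas[OF pm])
  have srm: "sr \<in> borel_measurable lebesgue" unfolding sr_def by (rule recip_meas[OF rm])
  have sqm: "sq \<in> borel_measurable lebesgue" unfolding sq_def using spm srm by measurable
  have sp01: "0 \<le> sp x" "sp x \<le> 1" for x unfolding sp_def using recip_ge1[of p x] p1[of x] by auto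
  have sr01: "0 \<le> sr x" "sr x \<le> 1" for x unfolding sr_def using recip_ge1[of r x] r1[of x] by auto
  have spr: "sp x \<le> sr x" for x unfolding sp_def sr_def
    by (rule recip_mono[where r=r and p=p, OF r1]) (use assms(3) in auto)
  have sq01: "0 \<le> sq x" "sq x \<le> 1" for x unfolding sq_def using spr[of x] sp01[of x] sr01[of x] by auto
  have q_eq: "quot_exp p r = from_recip sq" unfolding quot_exp_def sq_def sp_def sr_def ..
  have q1: "1 \<le> quot_exp p r x" for x unfolding q_eq by (rule from_recip_ge1) (use sq01 in auto)
  have vq: "vnorm (quot_exp p r) f = vn sq f" for f
    by (subst vnorm_vn[OF q1]) (simp add: q_eq recip_from_recip)
  have vp: "vnorm p f = vn sp f" for f unfolding sp_def by (rule vnorm_vn[OF p1])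
  have vr: "vnorm r f = vn sr f" for f unfolding sr_def by (rule vnorm_vn[OF r1])
  have vpc: "vnorm (conj_exp p) f = vn (\<lambda>x. 1 - sp x) f" for f
  proof -
    have "conj_exp p = from_recip (\<lambda>x. 1 - sp x)" unfolding conj_exp_def sp_def ..
    moreover have "1 \<le> from_recip (\<lambda>x. 1 - sp x) x" for x by (rule from_recip_ge1) (use sp01 in auto)
    ultimately show ?thesis by (simp add: vnorm_vn recip_from_recip)
  qed
  have vqc: "vnorm (conj_exp (quot_exp p r)) f = vn (\<lambda>x. 1 - sq x) f" for f
  proof -
    have "conj_exp (quot_exp p r) = from_recip (\<lambda>x. 1 - sq x)"
      unfolding conj_exp_def q_eq recip_from_recip ..
    moreover have "1 \<le> from_recip (\<lambda>x. 1 - sq x) x" for x by (rule from_recip_ge1) (use sq01 in auto)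
    ultimately show ?thesis by (simp add: vnorm_vn recip_from_recip)
  qed
  obtain K where key: "\<And>Q. is_cube Q \<Longrightarrow> vn sr (indicator Q) * vn (\<lambda>x. 1 - sr x) (indicator Q) \<le> ennreal K * emeasure lebesgue Q"
  proof -
    have "\<exists>K. \<forall>Q. is_cube Q \<longrightarrow> vn sr (indicator Q) * vn (\<lambda>x. 1 - sr x) (indicator Q) \<le> ennreal K * emeasure lebesgue Q"
    proof (rule cube_key[OF srm sr01 _ _ si])
      show "\<And>x y. 0 < dist x y \<Longrightarrow> dist x y < 1/2 \<Longrightarrow> \<bar>sr x - sr y\<bar> \<le> c0 / (- ln (dist x y))"
        unfolding sr_def by (rule loc)
      show "\<And>x. \<bar>sr x - sinf\<bar> \<le> cinf / ln (exp 1 + norm x)"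
        unfolding sr_def using dec0 sinf_eq by metis
    qed
    then show ?thesis using that by blast
  qed
  have cubeinfo: "Q \<in> sets lebesgue \<and> (\<exists>\<mu>. emeasure lebesgue Q = ennreal \<mu> \<and> 0 \<le> \<mu>)" if cQ: "is_cube Q" for Q :: "'a set"
  proof -
    obtain a b l where abl: "0 < l" "\<And>i. i \<in> Basis \<Longrightarrow> b \<bullet> i - a \<bullet> i = l" "Q = cbox a b"
      using cQ unfolding is_cube_def by blast
    have "emeasure lebesgue Q = ennreal (l ^ DIM('a))"
      unfolding abl(3) by (rule emeasure_cube) (use abl in auto)
    then show ?thesis using abl by auto
  qed
  have Rfin: "vn s (indicator Q) < \<infinity>" if cQ: "is_cube Q" "s \<in> borel_measurable lebesgue" "\<And>x. 0 \<le> s x" "\<And>x. s x \<le> 1" for Q :: "'a set" and s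
  proof -
    obtain \<mu> where "emeasure lebesgue Q = ennreal \<mu>" "0 \<le> \<mu>" using cubeinfo[OF cQ(1)] by blast
    then have "vn s (indicator Q) \<le> ennreal (\<mu> + 1)"
      using vn_ind_fin cubeinfo[OF cQ(1)] cQ(2-4) by blast
    then show ?thesis using le_less_trans by fastforce
  qed
  have sr1m: "(\<lambda>x. 1 - sr x) \<in> borel_measurable lebesgue" using srm by measurable
  have A1: "A_var p w"
    unfolding A_var_def
  proof (intro exI allI impI)
    fix Q :: "'a set" assume Q: "is_cube Q"
    have Qm: "Q \<in> sets lebesgue" using cubeinfo[OF Q] by blast
    have fm: "(\<lambda>x. inverse (w x) * indicator Q x) \<in> borel_measurable lebesgue" using wm Qm by measurable
    have gm: "(indicator Q :: 'a \<Rightarrow> real) \<in> borel_measurable lebesgue" using Qm by measurable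
    show "vnorm p (\<lambda>x. w x * indicator Q x) * vnorm (conj_exp p) (\<lambda>x. inverse (w x) * indicator Q x)
        \<le> ennreal (3 * max C 0 * max K 0) * emeasure lebesgue Q"
      unfolding vp vpc
    proof (rule combine)
      show "vn sp (\<lambda>x. w x * indicator Q x) * vn sq (\<lambda>x. inverse (w x) * indicator Q x) \<le> ennreal C * vn sr (indicator Q)"
        using AA[OF Q] unfolding vp vq vr by (simp add: mult.commute)
      show "vn sr (indicator Q) < \<infinity>" by (rule Rfin[OF Q srm sr01])
      show "vn sr (indicator Q) * vn (\<lambda>x. 1 - sr x) (indicator Q) \<le> ennreal K * emeasure lebesgue Q"
        by (rule key[OF Q])
      assume Yf: "vn sq (\<lambda>x. inverse (w x) * indicator Q x) < \<infinity>"
      have "vn (\<lambda>x. sq x + (1 - sr x)) (\<lambda>x. (inverse (w x) * indicator Q x) * indicator Q x)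
          \<le> 3 * vn sq (\<lambda>x. inverse (w x) * indicator Q x) * vn (\<lambda>x. 1 - sr x) (indicator Q)"
        by (rule vn_holder[OF sqm sr1m fm gm]) (use sq01 sr01 spr sp01 Yf Rfin[OF Q sr1m] in \<open>auto simp: sq_def\<close>)
      moreover have "(\<lambda>x. sq x + (1 - sr x)) = (\<lambda>x. 1 - sp x)" unfolding sq_def by auto
      moreover have "(\<lambda>x. (inverse (w x) * indicator Q x) * indicator Q x) = (\<lambda>x. inverse (w x) * indicator Q x)"
        by (auto simp: indicator_def)
      ultimately show "vn (\<lambda>x. 1 - sp x) (\<lambda>x. inverse (w x) * indicator Q x)
          \<le> 3 * vn sq (\<lambda>x. inverse (w x) * indicator Q x) * vn (\<lambda>x. 1 - sr x) (indicator Q)" by simp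
    qed
  qed
  have A2: "A_var (quot_exp p r) (\<lambda>x. inverse (w x))"
    unfolding A_var_def
  proof (intro exI allI impI)
    fix Q :: "'a set" assume Q: "is_cube Q"
    have Qm: "Q \<in> sets lebesgue" using cubeinfo[OF Q] by blast
    have fm: "(\<lambda>x. w x * indicator Q x) \<in> borel_measurable lebesgue" using wm Qm by measurable
    have gm: "(indicator Q :: 'a \<Rightarrow> real) \<in> borel_measurable lebesgue" using Qm by measurable
    show "vnorm (quot_exp p r) (\<lambda>x. inverse (w x) * indicator Q x) *
        vnorm (conj_exp (quot_exp p r)) (\<lambda>x. inverse (inverse (w x)) * indicator Q x)
        \<le> ennreal (3 * max C 0 * max K 0) * emeasure lebesgue Q"
      unfolding vq vqc inverse_inverse_eq
    proof (rule combine)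
      show "vn sq (\<lambda>x. inverse (w x) * indicator Q x) * vn sp (\<lambda>x. w x * indicator Q x) \<le> ennreal C * vn sr (indicator Q)"
        using AA[OF Q] unfolding vp vq vr by (simp add: mult.commute)
      show "vn sr (indicator Q) < \<infinity>" by (rule Rfin[OF Q srm sr01])
      show "vn sr (indicator Q) * vn (\<lambda>x. 1 - sr x) (indicator Q) \<le> ennreal K * emeasure lebesgue Q"
        by (rule key[OF Q])
      assume Yf: "vn sp (\<lambda>x. w x * indicator Q x) < \<infinity>"
      have "vn (\<lambda>x. sp x + (1 - sr x)) (\<lambda>x. (w x * indicator Q x) * indicator Q x)
          \<le> 3 * vn sp (\<lambda>x. w x * indicator Q x) * vn (\<lambda>x. 1 - sr x) (indicator Q)"
        by (rule vn_holder[OF spm sr1m fm gm]) (use sq01 sr01 spr sp01 Yf Rfin[OF Q sr1m] in \<open>auto simp: sq_def\<close>)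
      moreover have "(\<lambda>x. sp x + (1 - sr x)) = (\<lambda>x. 1 - sq x)" unfolding sq_def by auto
      moreover have "(\<lambda>x. (w x * indicator Q x) * indicator Q x) = (\<lambda>x. w x * indicator Q x)"
        by (auto simp: indicator_def)
      ultimately show "vn (\<lambda>x. 1 - sq x) (\<lambda>x. w x * indicator Q x)
          \<le> 3 * vn sp (\<lambda>x. w x * indicator Q x) * vn (\<lambda>x. 1 - sr x) (indicator Q)" by simp
    qed
  qed
  show ?thesis using A1 A2 by blast
qed

end
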